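(* In the standing setup, let $n\ge1$, let $I$ be a nonempty subset of $\{1,\dots,n\}$, and set $\delta:=\max\{|t_i-t_j|:i,j\in I\}$. Then $$\Big\|\frac1n\sum_{k=1}^n x_k\Big\|\ge\frac{\#I}{n}\,\rho_\infty\exp(-\delta^2/2)>0.$$
   Context: Standing setup. $X$ is a real Hilbert space. $u\colon[0,\infty)\to X$ satisfies $\langle u(s),u(t)\rangle=\exp(-(s-t)^2)$ for all $s,t\ge0$. $(d_n)_{n\ge1}$ satisfies: $d_n>0$, $\sum_k d_k^2<\infty$, $t_n:=\sum_{k=1}^{n-1}d_k\to+\infty$, $d_1\le1/8$, $d_{n+1}\le d_n/(1+64d_n^2)$ for all $n$. $\rho_1:=1$, $\rho_{n+1}:=\rho_n\exp(-d_n^2)$, $\rho_\infty:=\exp(-\sum_k d_k^2)$, $x_n:=\rho_nu(t_n)$. $\#I$ is the cardinality of $I$. *)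

theory Defs
  imports "HOL-Analysis.Analysis"
begin

text \<open>The sequence d is indexed from 1; d 0 is irrelevant.\<close>

definition tseq :: "(nat \<Rightarrow> real) \<Rightarrow> nat \<Rightarrow> real" where
  "tseq d n = (\<Sum>k\<in>{1..<n}. d k)"

definition rhoseq :: "(nat \<Rightarrow> real) \<Rightarrow> nat \<Rightarrow> real" where
  "rhoseq d n = (\<Prod>k\<in>{1..<n}. exp (- (d k)\<^sup>2))"

definition rho_inf :: "(nat \<Rightarrow> real) \<Rightarrow> real" where
  "rho_inf d = exp (- (\<Sum>k. (d (Suc k))\<^sup>2))"

definition xseq :: "(real \<Rightarrow> 'a::real_vector) \<Rightarrow> (nat \<Rightarrow> real) \<Rightarrow> nat \<Rightarrow> 'a" where
  "xseq u d n = rhoseq d n *\<^sub>R u (tseq d n)"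

end

theory Submission
  imports Defs
begin

lemma rho_ge:
  assumes d_sq: "summable (\<lambda>k. (d (Suc k))\<^sup>2)"
  shows "rhoseq d k \<ge> rho_inf d"
proof -
  have "(\<Sum>j\<in>{1..<k}. (d j)\<^sup>2) \<le> (\<Sum>j\<in>Suc ` {..<k}. (d j)\<^sup>2)"
    proof (rule sum_mono2)
    show "{1..<k} \<subseteq> Suc ` {..<k}"
    proof
      fix x assume "x \<in> {1..<k}"
      hence "x = Suc (x - 1)" "x - 1 < k" by auto
      thus "x \<in> Suc ` {..<k}" by blast
    qed
  qed auto
  also have "\<dots> = (\<Sum>i<k. (d (Suc i))\<^sup>2)" by (simp add: sum.reindex)
  also have "\<dots> \<le> (\<Sum>i. (d (Suc i))\<^sup>2)" by (rule sum_le_suminf[OF d_sq]) auto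
  finally have "(\<Sum>j\<in>{1..<k}. (d j)\<^sup>2) \<le> (\<Sum>i. (d (Suc i))\<^sup>2)" .
  moreover have "rhoseq d k = exp (- (\<Sum>j\<in>{1..<k}. (d j)\<^sup>2))"
    unfolding rhoseq_def by (simp add: exp_sum[symmetric] sum_negf)
  ultimately show ?thesis unfolding rho_inf_def by simp
qed

theorem lemma6p5:
  fixes u :: "real \<Rightarrow> 'a::{real_inner, complete_space}"
    and d :: "nat \<Rightarrow> real" and n :: nat and I :: "nat set"
  assumes u_inner: "\<And>s t. s \<ge> 0 \<Longrightarrow> t \<ge> 0 \<Longrightarrow> inner (u s) (u t) = exp (- (s - t)\<^sup>2)"
    and d_pos: "\<And>k. k \<ge> 1 \<Longrightarrow> d k > 0"
    and d_sq: "summable (\<lambda>k. (d (Suc k))\<^sup>2)"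
    and t_inf: "filterlim (tseq d) at_top sequentially"
    and d1: "d 1 \<le> 1/8"
    and d_rec: "\<And>k. k \<ge> 1 \<Longrightarrow> d (k + 1) \<le> d k / (1 + 64 * (d k)\<^sup>2)"
    and n1: "n \<ge> 1"
    and I_sub: "I \<subseteq> {1..n}" and I_ne: "I \<noteq> {}"
  shows "norm ((1 / real n) *\<^sub>R (\<Sum>k\<in>{1..n}. xseq u d k))
           \<ge> real (card I) / real n * rho_inf d
              * exp (- (Max {\<bar>tseq d i - tseq d j\<bar> | i j. i \<in> I \<and> j \<in> I})\<^sup>2 / 2)
       \<and> real (card I) / real n * rho_inf d
              * exp (- (Max {\<bar>tseq d i - tseq d j\<bar> | i j. i \<in> I \<and> j \<in> I})\<^sup>2 / 2) > 0"
proof -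
  define S where "S = {\<bar>tseq d i - tseq d j\<bar> | i j. i \<in> I \<and> j \<in> I}"
  define \<delta> where "\<delta> = Max S"
  define r where "r = rho_inf d"
  let ?t = "tseq d"
  let ?f = "\<lambda>k l. rhoseq d k * rhoseq d l * exp (- (?t k - ?t l)\<^sup>2)"
  have finI: "finite I" using I_sub finite_subset by blast
  have cardI: "card I > 0" using finI I_ne by auto
  have finS: "finite S"
  proof -
    have "S = (\<lambda>(i,j). \<bar>?t i - ?t j\<bar>) ` (I \<times> I)" unfolding S_def by auto
    thus ?thesis using finI by simp
  qed
  have r_pos: "r > 0" unfolding r_def rho_inf_def by simp
  have t_nn: "?t k \<ge> 0" for k unfolding tseq_def
    by (rule sum_nonneg) (auto intro: less_imp_le[OF d_pos])
  have rho_pos: "rhoseq d k > 0" for k unfolding rhoseq_def by (simp add: prod_pos)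
  have rho_ge': "rhoseq d k \<ge> r" for k unfolding r_def by (rule rho_ge[OF d_sq])
  have f_nn: "?f k l \<ge> 0" for k l using rho_pos[of k] rho_pos[of l] by simp
  have inner_x: "inner (xseq u d k) (xseq u d l) = ?f k l" for k l
    unfolding xseq_def using u_inner[OF t_nn t_nn] by (simp add: algebra_simps)
  have f_ge: "?f k l \<ge> r * r * exp (- \<delta>\<^sup>2)" if "k \<in> I" "l \<in> I" for k l
  proof -
    have "\<bar>?t k - ?t l\<bar> \<in> S" unfolding S_def using that by blast
    hence "\<bar>?t k - ?t l\<bar> \<le> \<delta>" unfolding \<delta>_def using finS by simp
    hence "\<bar>?t k - ?t l\<bar>\<^sup>2 \<le> \<delta>\<^sup>2" by (intro power_mono) auto
    hence e: "exp (- \<delta>\<^sup>2) \<le> exp (- (?t k - ?t l)\<^sup>2)" by simp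
    have "r * r \<le> rhoseq d k * rhoseq d l"
      using rho_ge'[of k] rho_ge'[of l] r_pos by (intro mult_mono) auto
    moreover have "0 \<le> rhoseq d k * rhoseq d l" using rho_pos[of k] rho_pos[of l] by simp
    ultimately show ?thesis using e r_pos by (rule_tac mult_mono) auto
  qed
  define X where "X = (\<Sum>k\<in>{1..n}. xseq u d k)"
  have "(norm X)\<^sup>2 = (\<Sum>k\<in>{1..n}. \<Sum>l\<in>{1..n}. ?f k l)"
    unfolding X_def power2_norm_eq_inner by (simp add: inner_sum_left inner_sum_right inner_x, subst sum.swap, simp add: algebra_simps)
  also have "\<dots> \<ge> (\<Sum>k\<in>I. \<Sum>l\<in>{1..n}. ?f k l)"
    by (rule sum_mono2) (use I_sub f_nn in \<open>auto intro: sum_nonneg\<close>)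
  also have "(\<Sum>k\<in>I. \<Sum>l\<in>{1..n}. ?f k l) \<ge> (\<Sum>k\<in>I. \<Sum>l\<in>I. ?f k l)"
    by (rule sum_mono, rule sum_mono2) (use I_sub f_nn in auto)
  also have "(\<Sum>k\<in>I. \<Sum>l\<in>I. ?f k l) \<ge> (\<Sum>k\<in>I. \<Sum>l\<in>I. r * r * exp (- \<delta>\<^sup>2))"
    by (intro sum_mono f_ge)
  finally have sq: "(norm X)\<^sup>2 \<ge> (real (card I) * r * exp (- \<delta>\<^sup>2 / 2))\<^sup>2"
    by (simp add: power2_eq_square mult_exp_exp algebra_simps)
  have "real (card I) * r * exp (- \<delta>\<^sup>2 / 2) \<le> norm X"
    using sq by (rule power2_le_imp_le) simp
  hence main: "real (card I) / real n * r * exp (- \<delta>\<^sup>2 / 2) \<le> norm ((1 / real n) *\<^sub>R X)"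
    using n1 by (simp add: divide_right_mono)
  have pos: "real (card I) / real n * r * exp (- \<delta>\<^sup>2 / 2) > 0"
    using cardI n1 r_pos by simp
  show ?thesis using main pos unfolding X_def r_def \<delta>_def S_def by simp
qed

end
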